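(* Let $\langle\mathcal U,\mathcal S,k\rangle$ be an instance of Set Cover as in the context and $D_{SC}$ the associated digraph with functions $F,B$. If there exists a set cover of size $k$ (a $k$-element subfamily of $\mathcal S$ whose union is $\mathcal U$), then the ST problem for $(D_{SC},F,B)$ has a positive answer.
   Context: Snow Team problem (ST): given a digraph $D=(\mathcal V,\mathcal A)$ whose underlying graph is connected, and $F:\mathcal V\to\{0,1\}$, $B:\mathcal V\to\mathbb N$, with $\mathbf k_B=\sum_vB(v)$: do there exist $\mathbf k_B$ directed walks, exactly $B(v)$ of which start at each $v$, such that, letting $H$ be the subgraph consisting of the vertices and arcs of these walks, all vertices of $F^{-1}(1)$ lie in one connected component of the underlying undirected graph of $H$? Such walks form a solution. Construction: $\mathcal U=\{1,\dots,n\}$, $\mathcal S=\{S_1,\dots,S_m\}$ with $S_t\subseteq\mathcal U$, $\bigcup_tS_t=\mathcal U$, and $1\le k\le m$. Write $S_t=\{x_1<\dots<x_{\ell(t)}\}$ and $I_i=\{j: i\in S_j\}$. The digraph $D_{SC}$ has vertices $u_i$ ($i\in\mathcal U$); $u_{i,j},u'_{i,j},v_{i,j},v'_{i,j}$ ($i\in\mathcal U$, $j\in I_i$); and $z,z_1,\dots,z_k$. Its arcs are those of the vertical paths $P_{i,j}=(u_{i,j},u_i,u'_{i,j},v_{i,j},v'_{i,j})$ ($i\in\mathcal U,j\in I_i$), of the horizontal paths $P^h_t=(z,v_{x_1,t},v_{x_2,t},\dots,v_{x_{\ell(t)},t})$ ($t\in\{1,\dots,m\}$, with $x_1<\dots<x_{\ell(t)}$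 the elements of $S_t$), and the arcs $(z_l,z)$ for $l=1,\dots,k$. The $i$-th element component $C_i$ is the subgraph induced by $\bigcup_{j\in I_i}V(P_{i,j})$. Set $F(v)=1$ for all vertices $v$, and $B(v)=1$ if $v$ is a source of $D_{SC}$ (i.e. $v\in\{u_{i,j}\}\cup\{z_1,\dots,z_k\}$) and $B(v)=0$ otherwise. *)

theory Defs
  imports Main
begin

definition walk_arcs :: "'v list \<Rightarrow> ('v \<times> 'v) set" where
  "walk_arcs w = set (zip w (tl w))"

definition dwalk :: "'v set \<Rightarrow> ('v \<times> 'v) set \<Rightarrow> 'v list \<Rightarrow> bool" where
  "dwalk V A w \<longleftrightarrow> w \<noteq> [] \<and> set w \<subseteq> V \<and> walk_arcs w \<subseteq> A"

definition H_verts :: "'v list list \<Rightarrow> 'v set" where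
  "H_verts ws = (\<Union>w\<in>set ws. set w)"

definition H_arcs :: "'v list list \<Rightarrow> ('v \<times> 'v) set" where
  "H_arcs ws = (\<Union>w\<in>set ws. walk_arcs w)"

definition st_solution ::
  "'v set \<Rightarrow> ('v \<times> 'v) set \<Rightarrow> ('v \<Rightarrow> nat) \<Rightarrow> ('v \<Rightarrow> nat) \<Rightarrow> 'v list list \<Rightarrow> bool" where
  "st_solution V A F B ws \<longleftrightarrow>
     (\<forall>w\<in>set ws. dwalk V A w) \<and>
     length ws = (\<Sum>v\<in>V. B v) \<and>
     (\<forall>v\<in>V. length (filter (\<lambda>w. hd w = v) ws) = B v) \<and>
     {v\<in>V. F v = 1} \<subseteq> H_verts ws \<and>
     (\<forall>x\<in>{v\<in>V. F v = 1}. \<forall>y\<in>{v\<in>V. F v = 1}.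
        (x, y) \<in> (H_arcs ws \<union> (H_arcs ws)\<inverse>)\<^sup>*)"

definition st_positive :: "'v set \<Rightarrow> ('v \<times> 'v) set \<Rightarrow> ('v \<Rightarrow> nat) \<Rightarrow> ('v \<Rightarrow> nat) \<Rightarrow> bool" where
  "st_positive V A F B \<longleftrightarrow> (\<exists>ws. st_solution V A F B ws)"

definition is_source :: "'v set \<Rightarrow> ('v \<times> 'v) set \<Rightarrow> 'v \<Rightarrow> bool" where
  "is_source V A v \<longleftrightarrow> v \<in> V \<and> (\<nexists>u. (u, v) \<in> A)"

text \<open>Universe {1..n}, family S 1, ..., S m (indexed by {1..m}), budget k.\<close>

datatype vtx = U nat | Uij nat nat | Uij' nat nat | Vij nat nat | Vij' nat nat | Z | Zl nat

definition Iset :: "nat \<Rightarrow> (nat \<Rightarrow> nat set) \<Rightarrow> nat \<Rightarrow> nat set" where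
  "Iset m S i = {j\<in>{1..m}. i \<in> S j}"

definition dsc_V :: "nat \<Rightarrow> nat \<Rightarrow> nat \<Rightarrow> (nat \<Rightarrow> nat set) \<Rightarrow> vtx set" where
  "dsc_V n m k S =
     U ` {1..n}
     \<union> (\<Union>i\<in>{1..n}. \<Union>j\<in>Iset m S i. {Uij i j, Uij' i j, Vij i j, Vij' i j})
     \<union> {Z} \<union> Zl ` {1..k}"

definition vert_path :: "nat \<Rightarrow> nat \<Rightarrow> vtx list" where
  "vert_path i j = [Uij i j, U i, Uij' i j, Vij i j, Vij' i j]"

definition horiz_path :: "(nat \<Rightarrow> nat set) \<Rightarrow> nat \<Rightarrow> vtx list" where
  "horiz_path S t = Z # map (\<lambda>x. Vij x t) (sorted_list_of_set (S t))"

definition dsc_A :: "nat \<Rightarrow> nat \<Rightarrow> nat \<Rightarrow> (nat \<Rightarrow> nat set) \<Rightarrow> (vtx \<times> vtx) set" where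
  "dsc_A n m k S =
     (\<Union>i\<in>{1..n}. \<Union>j\<in>Iset m S i. walk_arcs (vert_path i j))
     \<union> (\<Union>t\<in>{1..m}. walk_arcs (horiz_path S t))
     \<union> (\<lambda>l. (Zl l, Z)) ` {1..k}"

definition dsc_F :: "vtx \<Rightarrow> nat" where
  "dsc_F v = 1"

definition dsc_B :: "nat \<Rightarrow> nat \<Rightarrow> nat \<Rightarrow> (nat \<Rightarrow> nat set) \<Rightarrow> vtx \<Rightarrow> nat" where
  "dsc_B n m k S v = (if is_source (dsc_V n m k S) (dsc_A n m k S) v then 1 else 0)"

end

theory Submission
  imports Defs
begin

lemma walk_arcs_Cons2: "walk_arcs (a#b#w) = insert (a,b) (walk_arcs (b#w))"
  by (simp add: walk_arcs_def)

lemma walk_arcs_single[simp]: "walk_arcs [a] = {}"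
  by (simp add: walk_arcs_def)

lemma walk_reach: "x \<in> set w \<Longrightarrow> (hd w, x) \<in> (walk_arcs w)\<^sup>*"
proof (induction w)
  case Nil then show ?case by simp
next
  case (Cons a w)
  show ?case
  proof (cases w)
    case Nil then show ?thesis using Cons by simp
  next
    case (Cons b w')
    show ?thesis
    proof (cases "x = a")
      case True then show ?thesis by simp
    next
      case False
      then have "x \<in> set w" using Cons.prems by simp
      then have "(b, x) \<in> (walk_arcs w)\<^sup>*" using Cons.IH Cons by simp
      moreover have "walk_arcs w \<subseteq> walk_arcs (a#w)" using Cons by (auto simp: walk_arcs_Cons2)
      ultimately have "(b, x) \<in> (walk_arcs (a#w))\<^sup>*" using rtrancl_mono by blast
      moreover have "(a,b) \<in> walk_arcs (a#w)" using Cons by (simp add: walk_arcs_Cons2)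
      ultimately show ?thesis by (simp add: converse_rtrancl_into_rtrancl)
    qed
  qed
qed

lemma distinct_filter_eq_len:
  "distinct xs \<Longrightarrow> length (filter (\<lambda>x. x = v) xs) = (if v \<in> set xs then 1 else 0)"
  by (induction xs) auto

lemma arcs_in_H:
  assumes "w \<in> set ws" "x \<in> set w"
  shows "(hd w, x) \<in> (H_arcs ws \<union> (H_arcs ws)\<inverse>)\<^sup>*"
proof -
  have "walk_arcs w \<subseteq> H_arcs ws \<union> (H_arcs ws)\<inverse>" using assms(1) by (auto simp: H_arcs_def)
  then show ?thesis using walk_reach[OF assms(2)] rtrancl_mono by blast
qed

theorem lemma5:
  fixes n m k :: nat and S :: "nat \<Rightarrow> nat set"
  assumes "\<forall>t\<in>{1..m}. S t \<subseteq> {1..n}"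
    and "(\<Union>t\<in>{1..m}. S t) = {1..n}"
    and "1 \<le> k" and "k \<le> m"
    and "\<exists>C\<subseteq>{1..m}. card C = k \<and> (\<Union>t\<in>C. S t) = {1..n}"
  shows "st_positive (dsc_V n m k S) (dsc_A n m k S) dsc_F (dsc_B n m k S)"
proof -
  define V where "V = dsc_V n m k S"
  define A where "A = dsc_A n m k S"
  obtain C where C: "C \<subseteq> {1..m}" "card C = k" "(\<Union>t\<in>C. S t) = {1..n}" using assms(5) by blast
  have finC: "finite C" using C(1) finite_subset by blast
  obtain c where c: "bij_betw c {1..k} C" using ex_bij_betw_nat_finite_1[OF finC] C(2) by auto
  define wk where "wk = (\<lambda>v. case v of Uij i j \<Rightarrow> vert_path i j
       | Zl l \<Rightarrow> Zl l # horiz_path S (c l) | _ \<Rightarrow> [v])"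
  have finI: "finite (Iset m S i)" for i by (simp add: Iset_def)
  have finV: "finite V" unfolding V_def dsc_V_def using finI by auto
  define Src where "Src = {v\<in>V. is_source V A v}"
  have finSrc: "finite Src" using finV by (simp add: Src_def)
  obtain xs where xs: "set xs = Src" "distinct xs" using finite_distinct_list[OF finSrc] by blast
  define ws where "ws = map wk xs"
  have hdwk: "hd (wk v) = v" for v
    by (cases v) (auto simp: wk_def vert_path_def)
  have finS: "finite (S t)" if "t \<in> {1..m}" for t
    using assms(1) that finite_subset by blast
  have setH: "set (horiz_path S t) = insert Z ((\<lambda>x. Vij x t) ` S t)" if "t \<in> {1..m}" for t
    using finS[OF that] by (simp add: horiz_path_def)
  have cC: "c l \<in> C" if "l \<in> {1..k}" for l using c that bij_betwE by blast
  have cm: "c l \<in> {1..m}" if "l \<in> {1..k}" for l using cC[OF that] C(1) by blast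
  have horiz_Z: "(horiz_path S t) \<noteq> [] \<and> hd (horiz_path S t) = Z" for t
    by (simp add: horiz_path_def)
  have VijV: "Vij x t \<in> V" if "t \<in> {1..m}" "x \<in> S t" for x t
  proof -
    have "x \<in> {1..n}" using assms(1) that by blast
    moreover have "t \<in> Iset m S x" using that by (simp add: Iset_def)
    ultimately show ?thesis unfolding V_def dsc_V_def by blast
  qed
  have dw: "dwalk V A (wk v)" if "v \<in> V" for v
  proof (cases v)
    case (Uij i j)
    then have ij: "i \<in> {1..n}" "j \<in> Iset m S i" using that by (auto simp: V_def dsc_V_def)
    have "set (vert_path i j) \<subseteq> V" using ij by (auto simp: V_def dsc_V_def vert_path_def)
    moreover have "walk_arcs (vert_path i j) \<subseteq> A" using ij unfolding A_def dsc_A_def by blast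
    ultimately show ?thesis using Uij by (simp add: dwalk_def wk_def vert_path_def)
  next
    case (Zl l)
    then have l: "l \<in> {1..k}" using that by (auto simp: V_def dsc_V_def)
    have t: "c l \<in> {1..m}" using cm[OF l] .
    have ZV: "Z \<in> V" by (simp add: V_def dsc_V_def)
    have "set (horiz_path S (c l)) \<subseteq> V" using setH[OF t] VijV[OF t] ZV
      by auto
    moreover have "walk_arcs (horiz_path S (c l)) \<subseteq> A" using t unfolding A_def dsc_A_def by blast
    moreover have "(Zl l, Z) \<in> A" using l unfolding A_def dsc_A_def by blast
    moreover have "walk_arcs (Zl l # horiz_path S (c l)) = insert (Zl l, Z) (walk_arcs (horiz_path S (c l)))"
      by (simp add: horiz_path_def walk_arcs_Cons2)
    ultimately show ?thesis using Zl that by (simp add: dwalk_def wk_def)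
  qed (use that in \<open>auto simp: dwalk_def wk_def\<close>)
  have srcV: "Src \<subseteq> V" by (auto simp: Src_def)
  have Uij_src: "Uij i j \<in> Src" if "i \<in> {1..n}" "j \<in> Iset m S i" for i j
  proof -
    have "Uij i j \<in> V" using that unfolding V_def dsc_V_def by blast
    moreover have "(u, Uij i j) \<notin> A" for u
    proof -
      have "(u, Uij i j) \<notin> walk_arcs (vert_path a b)" for a b
        by (simp add: vert_path_def walk_arcs_def)
      moreover have "(u, Uij i j) \<notin> walk_arcs (horiz_path S t)" for t
      proof -
        have "snd ` walk_arcs (horiz_path S t) \<subseteq> set (tl (horiz_path S t))"
          by (auto simp: walk_arcs_def dest: set_zip_rightD)
        then show ?thesis by (force simp: horiz_path_def)
      qed
      ultimately show ?thesis unfolding A_def dsc_A_def by blast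
    qed
    ultimately show ?thesis by (simp add: Src_def is_source_def)
  qed
  have Zl_src: "Zl l \<in> Src" if "l \<in> {1..k}" for l
  proof -
    have "Zl l \<in> V" using that unfolding V_def dsc_V_def by blast
    moreover have "(u, Zl l) \<notin> A" for u
    proof -
      have "(u, Zl l) \<notin> walk_arcs (vert_path a b)" for a b
        by (simp add: vert_path_def walk_arcs_def)
      moreover have "(u, Zl l) \<notin> walk_arcs (horiz_path S t)" for t
      proof -
        have "snd ` walk_arcs (horiz_path S t) \<subseteq> set (tl (horiz_path S t))"
          by (auto simp: walk_arcs_def dest: set_zip_rightD)
        then show ?thesis by (force simp: horiz_path_def)
      qed
      ultimately show ?thesis unfolding A_def dsc_A_def by blast
    qed
    ultimately show ?thesis by (simp add: Src_def is_source_def)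
  qed
  have vp_in: "vert_path i j \<in> set ws" if "i \<in> {1..n}" "j \<in> Iset m S i" for i j
  proof -
    have "Uij i j \<in> set xs" using Uij_src[OF that] xs(1) by simp
    then show ?thesis unfolding ws_def wk_def by force
  qed
  have zl_in: "Zl l # horiz_path S (c l) \<in> set ws" if "l \<in> {1..k}" for l
  proof -
    have "Zl l \<in> set xs" using Zl_src[OF that] xs(1) by simp
    then show ?thesis unfolding ws_def wk_def by force
  qed
  define R where "R = (H_arcs ws \<union> (H_arcs ws)\<inverse>)\<^sup>*"
  have symR: "(x,y) \<in> R \<Longrightarrow> (y,x) \<in> R" for x y
    unfolding R_def by (metis converse_Un converse_converse rtrancl_converseI sup_commute)
  have trR: "(x,y) \<in> R \<Longrightarrow> (y,z) \<in> R \<Longrightarrow> (x,z) \<in> R" for x y z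
    unfolding R_def by (meson rtrancl_trans)
  have one: "1 \<in> {1..k}" using assms(3) by simp
  have Zl_R: "(Z, Zl l) \<in> R" if "l \<in> {1..k}" for l
  proof -
    have "Z \<in> set (Zl l # horiz_path S (c l))" by (simp add: horiz_path_def)
    from arcs_in_H[OF zl_in[OF that] this] have "(Zl l, Z) \<in> R" unfolding R_def by simp
    then show ?thesis using symR by simp
  qed
  have horiz_R: "(Z, x) \<in> R" if "l \<in> {1..k}" "x \<in> set (horiz_path S (c l))" for l x
  proof -
    have "(Zl l, x) \<in> R" using arcs_in_H[OF zl_in[OF that(1)], of x] that(2) unfolding R_def by simp
    then show ?thesis using trR[OF Zl_R[OF that(1)]] by simp
  qed
  have U_R: "(Z, U i) \<in> R" if "i \<in> {1..n}" for i
  proof -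
    have "i \<in> (\<Union>t\<in>C. S t)" using C(3) that by simp
    then obtain t where t: "t \<in> C" "i \<in> S t" by blast
    obtain l where l: "l \<in> {1..k}" "c l = t" using c t(1) unfolding bij_betw_def by blast
    have tm: "t \<in> {1..m}" using t C(1) by blast
    have "Vij i t \<in> set (horiz_path S (c l))" using setH[OF tm] l(2) t(2) by simp
    then have a: "(Z, Vij i t) \<in> R" by (rule horiz_R[OF l(1)])
    have ij: "t \<in> Iset m S i" using tm t by (simp add: Iset_def)
    have "Vij i t \<in> set (vert_path i t)" by (simp add: vert_path_def)
    from arcs_in_H[OF vp_in[OF that ij] this] have b: "(Uij i t, Vij i t) \<in> R"
      unfolding R_def by (simp add: vert_path_def)
    have "U i \<in> set (vert_path i t)" by (simp add: vert_path_def)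
    from arcs_in_H[OF vp_in[OF that ij] this] have cc: "(Uij i t, U i) \<in> R"
      unfolding R_def by (simp add: vert_path_def)
    show ?thesis using trR[OF trR[OF a symR[OF b]] cc] .
  qed
  have vp_R: "(Z, x) \<in> R" if "i \<in> {1..n}" "j \<in> Iset m S i" "x \<in> set (vert_path i j)" for i j x
  proof -
    from arcs_in_H[OF vp_in[OF that(1,2)] that(3)] have a: "(Uij i j, x) \<in> R"
      unfolding R_def by (simp add: vert_path_def)
    have "U i \<in> set (vert_path i j)" by (simp add: vert_path_def)
    from arcs_in_H[OF vp_in[OF that(1,2)] this] have b: "(Uij i j, U i) \<in> R"
      unfolding R_def by (simp add: vert_path_def)
    show ?thesis using trR[OF trR[OF U_R[OF that(1)] symR[OF b]] a] .
  qed
  have Iset_ne: "\<exists>j. j \<in> Iset m S i" if "i \<in> {1..n}" for i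
  proof -
    have "i \<in> (\<Union>t\<in>{1..m}. S t)" using assms(2) that by simp
    then obtain t where "t \<in> {1..m}" "i \<in> S t" by blast
    then show ?thesis by (auto simp: Iset_def)
  qed
  have allR: "v \<in> H_verts ws \<and> (Z, v) \<in> R" if vV: "v \<in> V" for v
  proof -
    have HV: "x \<in> set w \<Longrightarrow> w \<in> set ws \<Longrightarrow> x \<in> H_verts ws" for x w by (auto simp: H_verts_def)
    consider (a) i where "i \<in> {1..n}" "v = U i"
      | (b) i j where "i \<in> {1..n}" "j \<in> Iset m S i" "v \<in> set (vert_path i j)"
      | (c) "v = Z" | (d) l where "l \<in> {1..k}" "v = Zl l"
      using vV unfolding V_def dsc_V_def by (auto simp: vert_path_def)
    then show ?thesis
    proof cases
      case (a i)
      then obtain j where j: "j \<in> Iset m S i" using Iset_ne by blast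
      then show ?thesis using a vp_R[OF a(1) j] HV[OF _ vp_in[OF a(1) j]] by (simp add: vert_path_def)
    next
      case (b i j) then show ?thesis using vp_R HV vp_in by blast
    next
      case c
      have "Z \<in> set (Zl 1 # horiz_path S (c 1))" by (simp add: horiz_path_def)
      then show ?thesis using c HV[OF _ zl_in[OF one]] by (simp add: R_def)
    next
      case (d l)
      then show ?thesis using Zl_R[OF d(1)] HV[OF _ zl_in[OF d(1)]] by simp
    qed
  qed
  have "st_solution V A dsc_F (dsc_B n m k S) ws"
    unfolding st_solution_def
  proof (intro conjI ballI)
    fix w assume "w \<in> set ws"
    then obtain v where "v \<in> set xs" "w = wk v" by (auto simp: ws_def)
    then show "dwalk V A w" using dw xs(1) srcV by blast
  next
    have "(\<Sum>v\<in>V. dsc_B n m k S v) = card Src"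
      unfolding dsc_B_def Src_def V_def[symmetric] A_def[symmetric]
      using finV by (simp add: sum.If_cases Int_def)
    then show "length ws = (\<Sum>v\<in>V. dsc_B n m k S v)"
      using distinct_card[OF xs(2)] xs(1) by (simp add: ws_def)
  next
    fix v assume "v \<in> V"
    have "filter (\<lambda>w. hd w = v) ws = map wk (filter (\<lambda>x. x = v) xs)"
      by (simp add: ws_def filter_map comp_def hdwk)
    then have "length (filter (\<lambda>w. hd w = v) ws) = (if v \<in> Src then 1 else 0)"
      using distinct_filter_eq_len[OF xs(2)] xs(1) by simp
    then show "length (filter (\<lambda>w. hd w = v) ws) = dsc_B n m k S v"
      using \<open>v \<in> V\<close> unfolding dsc_B_def Src_def V_def[symmetric] A_def[symmetric] by simp
  next
    show "{v \<in> V. dsc_F v = 1} \<subseteq> H_verts ws" using allR by blast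
  next
    fix x y assume "x \<in> {v \<in> V. dsc_F v = 1}" "y \<in> {v \<in> V. dsc_F v = 1}"
    then have "(Z, x) \<in> R" "(Z, y) \<in> R" using allR by auto
    then show "(x, y) \<in> (H_arcs ws \<union> (H_arcs ws)\<inverse>)\<^sup>*"
      unfolding R_def[symmetric] using trR[OF symR] by blast
  qed
  then show ?thesis unfolding st_positive_def V_def A_def by blast
qed

end
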